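(* Let $\Bbbk$ be a field, $X$ the generic symmetric $n\times n$ matrix, and for $i=1,\dots,n$ let $d_i$ be the determinant of the $i\times i$ submatrix of $X$ in the bottom-left corner (rows $n-i+1,\dots,n$ and columns $1,\dots,i$). Put $\mathfrak{D}=d_1d_2\cdots d_n\in\Bbbk[X]$. With respect to the lexicographic monomial order on $\Bbbk[X]$ induced by the variable order $x_{11}>x_{12}>\cdots>x_{1n}>x_{22}>x_{23}>\cdots>x_{2n}>\cdots>x_{n-1,n}>x_{nn}$ (i.e. $x_{ij}>x_{kl}$ iff $(i,j)$ precedes $(k,l)$ lexicographically, $i\le j$, $k\le l$), the leading term of $\mathfrak{D}$ is $\prod_{1\le i\le j\le n}x_{ij}$. In particular, if $\operatorname{char}\Bbbk=p>0$, then $\mathfrak{D}^{p-1}\notin\mathfrak{m}_S^{[p]}$, where $\mathfrak{m}_S=(x_{ij}\mid 1\le i\le j\le n)$.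
   Context: $X=(x_{ij})$ is the symmetric $n\times n$ matrix whose entries are independent indeterminates subject only to $x_{ij}=x_{ji}$; $S=\Bbbk[X]=\Bbbk[x_{ij}\mid 1\le i\le j\le n]$. For an ideal $J$ in characteristic $p$, $J^{[p]}$ denotes the ideal generated by $p$-th powers of elements of $J$. *)

theory Defs
  imports "HOL-Library.Poly_Mapping" "HOL-Library.Product_Lexorder" "Jordan_Normal_Form.Determinant"
begin

type_synonym 'k mpoly = "((nat \<times> nat) \<Rightarrow>\<^sub>0 nat) \<Rightarrow>\<^sub>0 'k"

definition var :: "nat \<Rightarrow> nat \<Rightarrow> 'k::comm_ring_1 mpoly" where
  "var i j = Poly_Mapping.single (Poly_Mapping.single (i, j) 1) 1"

definition symX :: "nat \<Rightarrow> nat \<Rightarrow> 'k::comm_ring_1 mpoly" where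
  "symX r c = var (min r c) (max r c)"

text \<open>d_i: determinant of the i x i submatrix in the bottom-left corner:
  rows n-i+1..n, columns 1..i (0-based matrix index a,b corresponds to row n-i+1+a, column 1+b).\<close>
definition dminor :: "nat \<Rightarrow> nat \<Rightarrow> 'k::comm_ring_1 mpoly" where
  "dminor n i = det (mat i i (\<lambda>(a, b). symX (n - i + 1 + a) (1 + b)))"

definition frakD :: "nat \<Rightarrow> 'k::comm_ring_1 mpoly" where
  "frakD n = (\<Prod>i = 1..n. dminor n i)"

text \<open>Lex monomial order: x_(i,j) > x_(k,l) iff (i,j) < (k,l) lexicographically.\<close>
definition lex_gr :: "((nat \<times> nat) \<Rightarrow>\<^sub>0 nat) \<Rightarrow> ((nat \<times> nat) \<Rightarrow>\<^sub>0 nat) \<Rightarrow> bool" where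
  "lex_gr a b \<longleftrightarrow> (\<exists>v. Poly_Mapping.lookup a v > Poly_Mapping.lookup b v \<and> (\<forall>w. w < v \<longrightarrow> Poly_Mapping.lookup a w = Poly_Mapping.lookup b w))"

definition lead_monom :: "'k::zero mpoly \<Rightarrow> ((nat \<times> nat) \<Rightarrow>\<^sub>0 nat)" where
  "lead_monom f = (THE m. m \<in> Poly_Mapping.keys f \<and> (\<forall>m' \<in> Poly_Mapping.keys f. m' \<noteq> m \<longrightarrow> lex_gr m m'))"

definition lead_term :: "'k::zero mpoly \<Rightarrow> 'k mpoly" where
  "lead_term f = Poly_Mapping.single (lead_monom f) (Poly_Mapping.lookup f (lead_monom f))"

definition ideal_gen :: "'a::comm_ring_1 set \<Rightarrow> 'a set" where
  "ideal_gen A = module.span ((*)) A"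

definition frob_pow :: "'a::comm_ring_1 set \<Rightarrow> nat \<Rightarrow> 'a set" where
  "frob_pow J p = ideal_gen {f ^ p | f. f \<in> J}"

definition max_ideal :: "nat \<Rightarrow> 'k::comm_ring_1 mpoly set" where
  "max_ideal n = ideal_gen {var i j | i j. 1 \<le> i \<and> i \<le> j \<and> j \<le> n}"

end

theory Submission
  imports Defs "HOL-Computational_Algebra.Primes"
begin


type_synonym mono = "(nat \<times> nat) \<Rightarrow>\<^sub>0 nat"

lemma lex_gr_irrefl: "\<not> lex_gr a a"
  by (auto simp: lex_gr_def)

lemma lex_gr_asym: "lex_gr a b \<Longrightarrow> \<not> lex_gr b a"
  unfolding lex_gr_def
  by (metis less_asym linorder_neqE)

lemma lex_gr_trans: assumes "lex_gr a b" "lex_gr b c" shows "lex_gr a c"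
proof -
  obtain v1 where v1: "Poly_Mapping.lookup a v1 > Poly_Mapping.lookup b v1"
    "\<forall>w. w < v1 \<longrightarrow> Poly_Mapping.lookup a w = Poly_Mapping.lookup b w"
    using assms(1) unfolding lex_gr_def by blast
  obtain v2 where v2: "Poly_Mapping.lookup b v2 > Poly_Mapping.lookup c v2"
    "\<forall>w. w < v2 \<longrightarrow> Poly_Mapping.lookup b w = Poly_Mapping.lookup c w"
    using assms(2) unfolding lex_gr_def by blast
  show ?thesis
  proof (cases v1 v2 rule: linorder_cases)
    case less
    then show ?thesis unfolding lex_gr_def using v1 v2 by (intro exI[of _ v1]) auto
  next
    case equal
    then show ?thesis unfolding lex_gr_def using v1 v2 by (intro exI[of _ v1]) auto
  next
    case greater
    have "\<forall>w. w < v2 \<longrightarrow> Poly_Mapping.lookup a w = Poly_Mapping.lookup c w"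
      using v1(2) v2(2) greater by auto
    moreover have "Poly_Mapping.lookup a v2 = Poly_Mapping.lookup b v2"
      using v1(2) greater by blast
    ultimately have "Poly_Mapping.lookup a v2 > Poly_Mapping.lookup c v2 \<and> (\<forall>w. w < v2 \<longrightarrow> Poly_Mapping.lookup a w = Poly_Mapping.lookup c w)"
      using v2(1) by simp
    then show ?thesis unfolding lex_gr_def by blast
  qed
qed

lemma lex_gr_add: assumes "lex_gr a b" shows "lex_gr (a + c) (b + c)"
proof -
  obtain v where v: "Poly_Mapping.lookup a v > Poly_Mapping.lookup b v"
    "\<forall>w. w < v \<longrightarrow> Poly_Mapping.lookup a w = Poly_Mapping.lookup b w"
    using assms unfolding lex_gr_def by blast
  have "Poly_Mapping.lookup (a + c) v > Poly_Mapping.lookup (b + c) v"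
    using v(1) by (simp add: lookup_add)
  moreover have "\<forall>w. w < v \<longrightarrow> Poly_Mapping.lookup (a + c) w = Poly_Mapping.lookup (b + c) w"
    using v(2) by (simp add: lookup_add)
  ultimately show ?thesis unfolding lex_gr_def by blast
qed

lemma lex_gr_add_left: "lex_gr a b \<Longrightarrow> lex_gr (c + a) (c + b)"
  using lex_gr_add[of a b c] by (simp add: add.commute)

lemma lex_gr_add2:
  assumes "lex_gr m1 a" "b = m2 \<or> lex_gr m2 b"
  shows "lex_gr (m1 + m2) (a + b)"
proof -
  have 1: "lex_gr (m1 + m2) (a + m2)" using lex_gr_add[OF assms(1)] .
  show ?thesis
  proof (cases "b = m2")
    case False
    then have "lex_gr (a + m2) (a + b)" using assms(2) lex_gr_add_left by blast
    then show ?thesis using 1 lex_gr_trans by blast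
  qed (use 1 in simp)
qed

definition below :: "'k::comm_ring_1 mpoly \<Rightarrow> mono \<Rightarrow> bool" where
  "below f m \<longleftrightarrow> (\<forall>m'\<in>Poly_Mapping.keys f. lex_gr m m')"

definition LT :: "'k::comm_ring_1 mpoly \<Rightarrow> mono \<Rightarrow> 'k \<Rightarrow> bool" where
  "LT f m c \<longleftrightarrow> c \<noteq> 0 \<and> below (f - Poly_Mapping.single m c) m"

lemma below_zero[simp]: "below 0 m" by (simp add: below_def)

lemma below_add: "below f m \<Longrightarrow> below g m \<Longrightarrow> below (f + g) m"
  unfolding below_def using keys_add[of f g] by (meson Un_iff subsetD)

lemma below_sum: "(\<And>x. x \<in> A \<Longrightarrow> below (f x) m) \<Longrightarrow> below (sum f A) m"
proof (induction A rule: infinite_finite_induct)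
  case (insert x F)
  then show ?case by (simp add: below_add)
qed simp_all

lemma below_single: "lex_gr m m' \<Longrightarrow> below (Poly_Mapping.single m' c) m"
  unfolding below_def by simp

lemma below_mult:
  fixes f g :: "'k::comm_ring_1 mpoly"
  assumes "below f m1" "\<forall>b\<in>Poly_Mapping.keys g. b = m2 \<or> lex_gr m2 b"
  shows "below (f * g) (m1 + m2)"
  unfolding below_def
proof
  fix m' assume "m' \<in> Poly_Mapping.keys (f * g)"
  then obtain a b where "m' = a + b" "a \<in> Poly_Mapping.keys f" "b \<in> Poly_Mapping.keys g"
    using keys_mult[of f g] by auto
  moreover have "lex_gr m1 a" using assms(1) \<open>a \<in> Poly_Mapping.keys f\<close> unfolding below_def by blast
  moreover have "b = m2 \<or> lex_gr m2 b" using assms(2) \<open>b \<in> Poly_Mapping.keys g\<close> by blast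
  ultimately show "lex_gr (m1 + m2) m'" using lex_gr_add2 by simp
qed

lemma below_mult':
  fixes f g :: "'k::comm_ring_1 mpoly"
  assumes "\<forall>a\<in>Poly_Mapping.keys f. a = m1 \<or> lex_gr m1 a" "below g m2"
  shows "below (f * g) (m1 + m2)"
proof -
  have "f * g = g * f" by (rule mult.commute)
  moreover have "m1 + m2 = m2 + m1" by (rule add.commute)
  ultimately show ?thesis using below_mult[OF assms(2) assms(1)] by (simp only:)
qed

lemma LT_keys_le: assumes "LT f m c" shows "\<forall>b\<in>Poly_Mapping.keys f. b = m \<or> lex_gr m b"
proof
  fix b assume b: "b \<in> Poly_Mapping.keys f"
  show "b = m \<or> lex_gr m b"
  proof (cases "b = m")
    case False
    then have "Poly_Mapping.lookup (f - Poly_Mapping.single m c) b \<noteq> 0"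
      using b False by (simp add: lookup_minus in_keys_iff lookup_single)
    then have "b \<in> Poly_Mapping.keys (f - Poly_Mapping.single m c)" by (simp add: in_keys_iff)
    then show ?thesis using assms unfolding LT_def below_def by blast
  qed simp
qed

lemma LT_mult:
  fixes f g :: "'k::field mpoly"
  assumes "LT f m1 c" "LT g m2 d"
  shows "LT (f * g) (m1 + m2) (c * d)"
proof -
  let ?s1 = "Poly_Mapping.single m1 c" and ?s2 = "Poly_Mapping.single m2 d"
  have eq0: "f * g - ?s1 * ?s2 = (f - ?s1) * g + ?s1 * (g - ?s2)"
    by (simp add: algebra_simps)
  have eq: "f * g - Poly_Mapping.single (m1 + m2) (c * d) = (f - ?s1) * g + ?s1 * (g - ?s2)"
    using eq0 by (simp only: mult_single)
  have h1: "below ((f - ?s1) * g) (m1 + m2)"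
  proof (rule below_mult)
    show "below (f - ?s1) m1" using assms(1) unfolding LT_def by blast
    show "\<forall>b\<in>Poly_Mapping.keys g. b = m2 \<or> lex_gr m2 b" by (rule LT_keys_le[OF assms(2)])
  qed
  have h2: "below (?s1 * (g - ?s2)) (m1 + m2)"
  proof (rule below_mult')
    show "below (g - ?s2) m2" using assms(2) unfolding LT_def by blast
    show "\<forall>a\<in>Poly_Mapping.keys ?s1. a = m1 \<or> lex_gr m1 a" by simp
  qed
  have "c * d \<noteq> 0" using assms by (simp add: LT_def)
  then show ?thesis unfolding LT_def eq using below_add[OF h1 h2] by blast
qed

lemma LT_one: "LT (1 :: 'k::field mpoly) 0 1"
  unfolding LT_def by simp

lemma LT_prod:
  fixes f :: "'a \<Rightarrow> 'k::field mpoly"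
  assumes "finite A" "\<And>i. i \<in> A \<Longrightarrow> LT (f i) (m i) (c i)"
  shows "LT (prod f A) (sum m A) (prod c A)"
  using assms
proof (induction A rule: finite_induct)
  case empty
  then show ?case using LT_one by simp
next
  case (insert x F)
  then have "LT (f x * prod f F) (m x + sum m F) (c x * prod c F)"
    by (intro LT_mult) auto
  then show ?case using insert by simp
qed

lemma LT_power:
  fixes f :: "'k::field mpoly"
  assumes "LT f m c"
  shows "LT (f ^ k) (\<Sum>_<k. m) (c ^ k)"
proof (induction k)
  case 0
  then show ?case using LT_one by simp
next
  case (Suc k)
  then have "LT (f * f ^ k) (m + (\<Sum>_<k. m)) (c * c ^ k)"
    by (intro LT_mult[OF assms])
  then show ?case by (simp add: add.commute)
qed

lemma LT_lead:
  assumes "LT f m c"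
  shows "lead_monom f = m" "Poly_Mapping.lookup f m = c"
proof -
  have lk: "Poly_Mapping.lookup f m = c"
  proof -
    have "m \<notin> Poly_Mapping.keys (f - Poly_Mapping.single m c)"
      using assms lex_gr_irrefl[of m] unfolding LT_def below_def by blast
    then show ?thesis by (simp add: in_keys_iff lookup_minus)
  qed
  have P: "m \<in> Poly_Mapping.keys f \<and> (\<forall>m' \<in> Poly_Mapping.keys f. m' \<noteq> m \<longrightarrow> lex_gr m m')"
  proof -
    have "c \<noteq> 0" using assms unfolding LT_def by blast
    then have "m \<in> Poly_Mapping.keys f" using lk by (simp add: in_keys_iff)
    then show ?thesis using LT_keys_le[OF assms] by blast
  qed
  show "lead_monom f = m"
    unfolding lead_monom_def
  proof (rule the_equality)
    fix m2 assume A: "m2 \<in> Poly_Mapping.keys f \<and> (\<forall>m' \<in> Poly_Mapping.keys f. m' \<noteq> m2 \<longrightarrow> lex_gr m2 m')"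
    show "m2 = m"
    proof (rule ccontr)
      assume ne: "m2 \<noteq> m"
      then have "lex_gr m2 m" using A P by auto
      moreover have "lex_gr m m2" using ne A P by auto
      ultimately show False using lex_gr_asym[of m m2] by simp
    qed
  qed (rule P)
  show "Poly_Mapping.lookup f m = c" by (rule lk)
qed



definition pr :: "nat \<Rightarrow> nat \<Rightarrow> nat \<Rightarrow> nat \<times> nat" where
  "pr s a b = (min (s+1+a) (1+b), max (s+1+a) (1+b))"

definition mono_of :: "nat \<Rightarrow> nat \<Rightarrow> (nat \<Rightarrow> nat) \<Rightarrow> mono" where
  "mono_of s i p = (\<Sum>a\<in>{0..<i}. Poly_Mapping.single (pr s a (p a)) 1)"

lemma prod_single:
  fixes c :: "'a \<Rightarrow> 'k::comm_ring_1"
  assumes "finite A"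
  shows "(\<Prod>x\<in>A. Poly_Mapping.single (m x) (c x)) = Poly_Mapping.single (sum m A) (prod c A)"
  using assms
proof (induction A rule: finite_induct)
  case empty
  then show ?case by simp
next
  case (insert x F)
  then show ?case by (simp add: mult_single)
qed

lemma lookup_mono_of:
  "Poly_Mapping.lookup (mono_of s i p) w = (\<Sum>a\<in>{0..<i}. if pr s a (p a) = w then 1 else 0)"
  unfolding mono_of_def lookup_sum by (intro sum.cong) (auto simp: lookup_single when_def)

lemma pr_ge:
  assumes "a0 \<le> a" "a0 \<le> b"
  shows "pr s a0 a0 \<le> pr s a b" "pr s a b = pr s a0 a0 \<Longrightarrow> a = a0 \<and> b = a0"
  using assms by (auto simp: pr_def less_eq_prod_def min_def max_def split: if_splits)

lemma pr_diag: "pr s a a = (1 + a, s + 1 + a)"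
  by (simp add: pr_def)

lemma key:
  assumes perm: "p permutes {0..<i}" and nid: "p \<noteq> id"
  shows "lex_gr (mono_of s i id) (mono_of s i p)"
proof -
  have ex: "\<exists>a. p a \<noteq> a" using nid by (auto simp: fun_eq_iff)
  define a0 where "a0 = (LEAST a. p a \<noteq> a)"
  have pa0: "p a0 \<noteq> a0" unfolding a0_def using LeastI_ex[OF ex] .
  have below_a0: "p a = a" if "a < a0" for a
    using not_less_Least[of a "\<lambda>a. p a \<noteq> a"] that unfolding a0_def by blast
  have a0i: "a0 < i" using pa0 permutes_not_in[OF perm] by fastforce
  have inj: "inj p" using perm by (rule permutes_inj)
  have hge: "a0 \<le> p a" if "a0 \<le> a" for a
  proof (rule ccontr)
    assume "\<not> a0 \<le> p a"
    then have "p (p a) = p a" using below_a0 by simp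
    then have "p a = a" using inj by (simp add: inj_eq)
    then show False using \<open>\<not> a0 \<le> p a\<close> that by simp
  qed
  define v where "v = pr s a0 a0"
  have diag_ne: "pr s a a \<noteq> v" if "a < a0" for a
    using that by (simp add: v_def pr_diag)
  have l1: "Poly_Mapping.lookup (mono_of s i id) v = 1"
  proof -
    have "Poly_Mapping.lookup (mono_of s i id) v = (\<Sum>a\<in>{0..<i}. if a = a0 then 1 else 0)"
      unfolding lookup_mono_of by (intro sum.cong) (auto simp: v_def pr_diag)
    also have "\<dots> = 1" using a0i by simp
    finally show ?thesis .
  qed
  have l2: "Poly_Mapping.lookup (mono_of s i p) v = 0"
  proof -
    have "Poly_Mapping.lookup (mono_of s i p) v = (\<Sum>a\<in>{0..<i}. (0::nat))"
      unfolding lookup_mono_of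
    proof (intro sum.cong refl)
      fix a assume "a \<in> {0..<i}"
      show "(if pr s a (p a) = v then 1 else 0) = (0::nat)"
      proof (cases "a < a0")
        case True
        then show ?thesis using below_a0[OF True] diag_ne[OF True] by simp
      next
        case False
        then have "a0 \<le> a" "a0 \<le> p a" using hge by auto
        then have "pr s a (p a) = v \<Longrightarrow> a = a0 \<and> p a = a0" using pr_ge(2) unfolding v_def by blast
        then show ?thesis using pa0 by auto
      qed
    qed
    then show ?thesis by simp
  qed
  have l3: "Poly_Mapping.lookup (mono_of s i id) w = Poly_Mapping.lookup (mono_of s i p) w" if "w < v" for w
    unfolding lookup_mono_of
  proof (intro sum.cong refl)
    fix a assume "a \<in> {0..<i}"
    show "(if pr s a (id a) = w then 1 else 0) = (if pr s a (p a) = w then 1 else (0::nat))"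
    proof (cases "a < a0")
      case True
      then show ?thesis using below_a0[OF True] by simp
    next
      case False
      then have "a0 \<le> a" "a0 \<le> p a" using hge by auto
      then have "v \<le> pr s a (p a)" "v \<le> pr s a a" using pr_ge(1) unfolding v_def by blast+
      then show ?thesis using \<open>w < v\<close> by auto
    qed
  qed
  show ?thesis unfolding lex_gr_def using l1 l2 l3 by (intro exI[of _ v]) simp
qed

lemma dminor_expand:
  "(dminor n i :: 'k::comm_ring_1 mpoly) =
     (\<Sum>p\<in>{p. p permutes {0..<i}}. Poly_Mapping.single (mono_of (n - i) i p) (of_int (sign p)))"
  unfolding dminor_def det_def'[OF mat_carrier]
proof (intro sum.cong refl)
  fix p assume "p \<in> {p. p permutes {0..<i}}"
  then have perm: "p permutes {0..<i}" by simp
  have "(\<Prod>a = 0..<i. mat i i (\<lambda>(a, b). symX (n - i + 1 + a) (1 + b) :: 'k mpoly) $$ (a, p a))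
      = (\<Prod>a = 0..<i. Poly_Mapping.single (Poly_Mapping.single (pr (n - i) a (p a)) 1) 1)"
  proof (intro prod.cong refl)
    fix a assume a: "a \<in> {0..<i}"
    then have "p a < i" using permutes_in_image[OF perm] by simp
    then show "mat i i (\<lambda>(a, b). symX (n - i + 1 + a) (1 + b) :: 'k mpoly) $$ (a, p a)
      = Poly_Mapping.single (Poly_Mapping.single (pr (n - i) a (p a)) 1) 1"
      using a by (simp add: symX_def var_def pr_def)
  qed
  also have "\<dots> = Poly_Mapping.single (mono_of (n - i) i p) 1"
    by (simp add: prod_single mono_of_def)
  finally show "signof p * (\<Prod>a = 0..<i. mat i i (\<lambda>(a, b). symX (n - i + 1 + a) (1 + b) :: 'k mpoly) $$ (a, p a))
      = Poly_Mapping.single (mono_of (n - i) i p) (of_int (sign p))"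
    by (simp add: single_of_int[symmetric] mult_single del: single_of_int)
qed

lemma LT_dminor: "LT (dminor n i :: 'k::field mpoly) (mono_of (n - i) i id) 1"
proof -
  let ?P = "{p. p permutes {0..<i}}"
  let ?t = "\<lambda>p. Poly_Mapping.single (mono_of (n - i) i p) (of_int (sign p)) :: 'k mpoly"
  have fin: "finite ?P" by (rule finite_permutations) simp
  have idP: "id \<in> ?P" by (simp add: permutes_id)
  have r: "sum ?t ?P = ?t id + sum ?t (?P - {id})" by (rule sum.remove[OF fin idP])
  have "dminor n i = ?t id + sum ?t (?P - {id})"
    unfolding dminor_expand by (rule r)
  then have eq: "dminor n i - Poly_Mapping.single (mono_of (n - i) i id) 1 = sum ?t (?P - {id})"
    by (simp add: sign_id)
  have "below (sum ?t (?P - {id})) (mono_of (n - i) i id)"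
  proof (rule below_sum)
    fix p assume "p \<in> ?P - {id}"
    then have "p permutes {0..<i}" "p \<noteq> id" by auto
    then show "below (?t p) (mono_of (n - i) i id)" by (intro below_single key)
  qed
  then show ?thesis unfolding LT_def eq by simp
qed



definition Sset :: "nat \<Rightarrow> (nat \<times> nat) set" where
  "Sset n = {(i, j). 1 \<le> i \<and> i \<le> j \<and> j \<le> n}"

lemma finite_Sset: "finite (Sset n)"
proof -
  have "Sset n \<subseteq> {1..n} \<times> {1..n}" by (auto simp: Sset_def)
  then show ?thesis by (rule finite_subset) simp
qed

lemma LT_frakD: "LT (frakD n :: 'k::field mpoly) (\<Sum>i\<in>{1..n}. mono_of (n - i) i id) 1"
proof -
  have "LT (\<Prod>i\<in>{1..n}. dminor n i :: 'k mpoly) (\<Sum>i\<in>{1..n}. mono_of (n - i) i id) (\<Prod>i\<in>{1..n}. 1)"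
    by (rule LT_prod) (auto intro: LT_dminor)
  then show ?thesis unfolding frakD_def by simp
qed

lemma M_eq: "(\<Sum>i\<in>{1..n}. mono_of (n - i) i id) = (\<Sum>x\<in>Sset n. Poly_Mapping.single x 1)"
proof -
  define h where "h = (\<lambda>x::nat \<times> nat. (1 + snd x, n - fst x + 1 + snd x))"
  have "(\<Sum>i\<in>{1..n}. mono_of (n - i) i id) = (\<Sum>i\<in>{1..n}. \<Sum>a\<in>{0..<i}. Poly_Mapping.single (h (i, a)) 1)"
    by (intro sum.cong refl) (auto simp: mono_of_def pr_def h_def)
  also have "\<dots> = (\<Sum>x\<in>Sigma {1..n} (\<lambda>i. {0..<i}). Poly_Mapping.single (h x) 1)"
    by (subst sum.Sigma) (auto simp: split_def)
  also have "\<dots> = (\<Sum>x\<in>Sset n. Poly_Mapping.single x 1)"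
  proof (rule sum.reindex_bij_betw)
    show "bij_betw h (Sigma {1..n} (\<lambda>i. {0..<i})) (Sset n)"
    proof (rule bij_betw_byWitness[where f' = "\<lambda>(k, l). (n + k - l, k - 1)"])
      show "\<forall>a\<in>Sigma {1..n} (\<lambda>i. {0..<i}). (\<lambda>(k, l). (n + k - l, k - 1)) (h a) = a"
        by (auto simp: h_def)
      show "\<forall>a'\<in>Sset n. h ((\<lambda>(k, l). (n + k - l, k - 1)) a') = a'"
        by (auto simp: h_def Sset_def)
      show "h ` Sigma {1..n} (\<lambda>i. {0..<i}) \<subseteq> Sset n"
        by (auto simp: h_def Sset_def)
      show "(\<lambda>(k, l). (n + k - l, k - 1)) ` Sset n \<subseteq> Sigma {1..n} (\<lambda>i. {0..<i})"
        by (auto simp: Sset_def)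
    qed
  qed
  finally show ?thesis .
qed

lemma prod_var: "(\<Prod>(i, j) \<in> {(i, j). 1 \<le> i \<and> i \<le> j \<and> j \<le> n}. var i j :: 'k::comm_ring_1 mpoly)
   = Poly_Mapping.single (\<Sum>x\<in>Sset n. Poly_Mapping.single x 1) 1"
proof -
  have "(\<Prod>(i, j) \<in> {(i, j). 1 \<le> i \<and> i \<le> j \<and> j \<le> n}. var i j :: 'k mpoly)
      = (\<Prod>x\<in>Sset n. Poly_Mapping.single (Poly_Mapping.single x 1) 1)"
    unfolding Sset_def by (intro prod.cong refl) (auto simp: var_def)
  also have "\<dots> = Poly_Mapping.single (\<Sum>x\<in>Sset n. Poly_Mapping.single x 1) (\<Prod>x\<in>Sset n. 1)"
    by (rule prod_single[OF finite_Sset])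
  finally show ?thesis by simp
qed

lemma part1: "lead_term (frakD n :: 'k::field mpoly) = (\<Prod>(i, j) \<in> {(i, j). 1 \<le> i \<and> i \<le> j \<and> j \<le> n}. var i j)"
proof -
  have L: "LT (frakD n :: 'k mpoly) (\<Sum>i\<in>{1..n}. mono_of (n - i) i id) 1" by (rule LT_frakD)
  have L': "LT (frakD n :: 'k mpoly) (\<Sum>x\<in>Sset n. Poly_Mapping.single x 1) 1"
    using L unfolding M_eq .
  show ?thesis
    unfolding lead_term_def prod_var LT_lead(1)[OF L'] LT_lead(2)[OF L'] ..
qed



lemma frob:
  fixes x y :: "'a::comm_ring_1"
  assumes p: "prime p" and c: "of_nat p = (0::'a)"
  shows "(x + y) ^ p = x ^ p + y ^ p"
proof -
  let ?g = "\<lambda>k. of_nat (p choose k) * x ^ k * y ^ (p - k)"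
  have p0: "p \<noteq> 0" using p by auto
  have z: "?g k = 0" if "k \<in> {..p} - {0, p}" for k
  proof -
    have "p dvd (p choose k)" using that p0 p by (intro dvd_choose_prime) auto
    then obtain q where "p choose k = p * q" by blast
    then have "(of_nat (p choose k) :: 'a) = 0" using c by simp
    then show ?thesis by simp
  qed
  have "(x + y) ^ p = sum ?g {..p}" by (rule binomial_ring)
  also have "\<dots> = sum ?g {0, p}"
    by (rule sum.mono_neutral_right) (use z in auto)
  also have "\<dots> = x ^ p + y ^ p" using p0 by simp
  finally show ?thesis .
qed

lemma module_mult: "Modules.module ((*) :: 'a::comm_ring_1 \<Rightarrow> 'a \<Rightarrow> 'a)"
  by unfold_locales (simp_all add: algebra_simps)

definition Iset :: "nat \<Rightarrow> 'k::comm_ring_1 mpoly set" where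
  "Iset p = {f. \<forall>m\<in>Poly_Mapping.keys f. \<exists>w. p \<le> Poly_Mapping.lookup m w}"

lemma Iset_zero: "0 \<in> Iset p" by (simp add: Iset_def)

lemma Iset_add: assumes "f \<in> Iset p" "g \<in> Iset p" shows "f + g \<in> Iset p"
  unfolding Iset_def mem_Collect_eq
proof
  fix m assume "m \<in> Poly_Mapping.keys (f + g)"
  then have "m \<in> Poly_Mapping.keys f \<or> m \<in> Poly_Mapping.keys g" using keys_add[of f g] by auto
  then show "\<exists>w. p \<le> Poly_Mapping.lookup m w" using assms unfolding Iset_def by auto
qed

lemma Iset_mult: assumes "f \<in> Iset p" shows "r * f \<in> Iset p"
  unfolding Iset_def mem_Collect_eq
proof
  fix m assume "m \<in> Poly_Mapping.keys (r * f)"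
  then obtain a b where ab: "m = a + b" "b \<in> Poly_Mapping.keys f" using keys_mult[of r f] by auto
  then obtain w where "p \<le> Poly_Mapping.lookup b w" using assms unfolding Iset_def by auto
  then have "p \<le> Poly_Mapping.lookup m w" using ab by (simp add: lookup_add)
  then show "\<exists>w. p \<le> Poly_Mapping.lookup m w" by blast
qed

lemma Iset_subspace: "Modules.module.subspace ((*)) (Iset p :: 'k::comm_ring_1 mpoly set)"
  using Modules.module.subspaceI[OF module_mult, of "Iset p"] Iset_zero Iset_add Iset_mult by blast

lemma single_power: "(Poly_Mapping.single m c :: 'k::comm_ring_1 mpoly) ^ k = Poly_Mapping.single (\<Sum>_<k. m) (c ^ k)"
  by (induction k) (simp_all add: power_Suc2 mult_single add.commute)

lemma var_power_in: assumes "p > 0" shows "(var i j :: 'k::comm_ring_1 mpoly) ^ p \<in> Iset p"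
proof -
  have "(var i j :: 'k mpoly) ^ p = Poly_Mapping.single (\<Sum>_<p. Poly_Mapping.single (i, j) 1) 1"
    by (simp add: var_def single_power)
  moreover have "p \<le> Poly_Mapping.lookup (\<Sum>_<p. Poly_Mapping.single (i, j) (1::nat)) (i, j)"
    by (simp add: lookup_sum)
  ultimately show ?thesis unfolding Iset_def by auto
qed

lemma frob_in_Iset:
  fixes f :: "'k::comm_ring_1 mpoly"
  assumes p: "prime p" and c: "of_nat p = (0::'k)" and f: "f \<in> max_ideal n"
  shows "f ^ p \<in> Iset p"
proof -
  have p0: "p > 0" using p prime_gt_0_nat by blast
  have c': "of_nat p = (0::'k mpoly)"
  proof -
    have "(of_nat p :: 'k mpoly) = Poly_Mapping.single 0 (of_nat p)" by simp
    then show ?thesis using c by simp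
  qed
  from f have "f \<in> Modules.module.span ((*)) {var i j | i j. 1 \<le> i \<and> i \<le> j \<and> j \<le> n}"
    unfolding max_ideal_def ideal_gen_def .
  then show ?thesis
  proof (rule Modules.module.span_induct_alt[OF module_mult, where h = "\<lambda>f. f ^ p \<in> Iset p"])
    show "0 ^ p \<in> Iset p" using p0 Iset_zero by (simp add: zero_power)
  next
    fix c x y :: "'k mpoly"
    assume xs: "x \<in> {var i j | i j. 1 \<le> i \<and> i \<le> j \<and> j \<le> n}" and y: "y ^ p \<in> Iset p"
    then obtain i j where x: "x = var i j" by blast
    have "(c * x + y) ^ p = c ^ p * x ^ p + y ^ p"
      using frob[OF p c'] by (simp add: power_mult_distrib)
    moreover have "c ^ p * x ^ p \<in> Iset p" using var_power_in[OF p0] x by (intro Iset_mult) simp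
    ultimately show "(c * x + y) ^ p \<in> Iset p" using y Iset_add by simp
  qed
qed

lemma frob_pow_sub:
  fixes n :: nat
  assumes p: "prime p" and c: "of_nat p = (0::'k::comm_ring_1)"
  shows "frob_pow (max_ideal n :: 'k mpoly set) p \<subseteq> Iset p"
  unfolding frob_pow_def ideal_gen_def
  by (rule Modules.module.span_minimal[OF module_mult]) (use frob_in_Iset[OF p c] Iset_subspace in auto)



lemma lookup_M_le: "Poly_Mapping.lookup (\<Sum>x\<in>Sset n. Poly_Mapping.single x (1::nat)) w \<le> 1"
proof -
  have "Poly_Mapping.lookup (\<Sum>x\<in>Sset n. Poly_Mapping.single x (1::nat)) w
      = (\<Sum>x\<in>Sset n. if x = w then 1 else 0)"
    unfolding lookup_sum by (intro sum.cong refl) (simp add: lookup_single when_def)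
  also have "\<dots> = (if w \<in> Sset n then 1 else 0)" using finite_Sset by (simp add: sum.delta)
  finally show ?thesis by simp
qed

lemma LT_frakD': "LT (frakD n :: 'k::field mpoly) (\<Sum>x\<in>Sset n. Poly_Mapping.single x 1) 1"
  using LT_frakD[where 'k='k, of n] unfolding M_eq .

theorem mainTheorem3:
  fixes n :: nat
  assumes "n \<ge> 1"
  shows "lead_term (frakD n :: 'k::field mpoly) = (\<Prod>(i, j) \<in> {(i, j). 1 \<le> i \<and> i \<le> j \<and> j \<le> n}. var i j)
    \<and> (CHAR('k) > 0 \<longrightarrow> (frakD n :: 'k mpoly) ^ (CHAR('k) - 1) \<notin> frob_pow (max_ideal n) CHAR('k))"
proof
  show "lead_term (frakD n :: 'k::field mpoly) = (\<Prod>(i, j) \<in> {(i, j). 1 \<le> i \<and> i \<le> j \<and> j \<le> n}. var i j)"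
    by (rule part1)
  show "CHAR('k) > 0 \<longrightarrow> (frakD n :: 'k mpoly) ^ (CHAR('k) - 1) \<notin> frob_pow (max_ideal n) CHAR('k)"
  proof
    assume pos: "CHAR('k) > 0"
    define p where "p = CHAR('k)"
    have pr: "prime p" unfolding p_def using pos by (rule prime_CHAR_semidom)
    have c: "of_nat p = (0::'k)" unfolding p_def by simp
    define M where "M = (\<Sum>x\<in>Sset n. Poly_Mapping.single x (1::nat))"
    define M' where "M' = (\<Sum>_<p - 1. M)"
    have L: "LT ((frakD n :: 'k mpoly) ^ (p - 1)) M' (1 ^ (p - 1))"
      unfolding M'_def M_def by (rule LT_power[OF LT_frakD'])
    have lk: "Poly_Mapping.lookup ((frakD n :: 'k mpoly) ^ (p - 1)) M' = 1"
      using LT_lead(2)[OF L] by simp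
    have notin: "(frakD n :: 'k mpoly) ^ (p - 1) \<notin> Iset p"
    proof
      assume "(frakD n :: 'k mpoly) ^ (p - 1) \<in> Iset p"
      moreover have "M' \<in> Poly_Mapping.keys ((frakD n :: 'k mpoly) ^ (p - 1))"
        using lk by (simp add: in_keys_iff)
      ultimately obtain w where w: "p \<le> Poly_Mapping.lookup M' w" unfolding Iset_def by blast
      have "Poly_Mapping.lookup M' w = (p - 1) * Poly_Mapping.lookup M w"
        unfolding M'_def by (simp add: lookup_sum)
      also have "\<dots> \<le> (p - 1) * 1" using lookup_M_le[of n w] unfolding M_def by (intro mult_left_mono) auto
      finally show False using w pr prime_gt_0_nat[OF pr] by simp
    qed
    then show "(frakD n :: 'k mpoly) ^ (CHAR('k) - 1) \<notin> frob_pow (max_ideal n) CHAR('k)"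
      using frob_pow_sub[OF pr c, of n] unfolding p_def by blast
  qed
qed


end
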